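(* Let $(M,\sigma)$ be a Riemannian manifold, $h=\sigma-(dx^0)^2$ on $M\times\mathbb{R}$, and let $u\colon M\to\mathbb{R}$ be smooth with $|\nabla u|_\sigma<1$. Let $g_{ij}=\sigma_{ij}-u_iu_j$ be the induced metric on $\mathrm{graph}\,u$, $v=1/\sqrt{1-|\nabla u|_\sigma^2}$, and $A$ the second fundamental form of $\mathrm{graph}\,u$ in $(M\times\mathbb{R},h)$. Then $|\langle\nabla u,\nabla v\rangle|\le|A|\,|\nabla u|^2$.
   Context: Here $\langle\cdot,\cdot\rangle$, $|\cdot|$ and $\nabla$ are taken with respect to the induced metric $g$. *)

theory Defs
  imports "HOL-Analysis.Analysis"
begin

text \<open>Local-coordinate setting: the Riemannian manifold (M, sigma) is represented by a
coordinate chart, i.e. an open set U of real^'n carrying a smooth field of symmetric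
positive definite matrices sigma x (the metric coefficients sigma_ij).\<close>

definition pd :: "'n::finite \<Rightarrow> (real^'n \<Rightarrow> real) \<Rightarrow> real^'n \<Rightarrow> real" where
  "pd i f x = deriv (\<lambda>t. f (x + t *\<^sub>R axis i 1)) 0"

fun iter_pd :: "'n::finite list \<Rightarrow> (real^'n \<Rightarrow> real) \<Rightarrow> real^'n \<Rightarrow> real" where
  "iter_pd [] f = f"
| "iter_pd (i # is) f = pd i (iter_pd is f)"

definition smooth_on :: "(real^'n::finite) set \<Rightarrow> (real^'n \<Rightarrow> real) \<Rightarrow> bool" where
  "smooth_on U f \<longleftrightarrow> (\<forall>is. \<forall>x\<in>U. iter_pd is f differentiable (at x))"

definition riem_metric_on :: "(real^'n::finite) set \<Rightarrow> (real^'n \<Rightarrow> real^'n^'n) \<Rightarrow> bool" where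
  "riem_metric_on U \<sigma> \<longleftrightarrow>
     (\<forall>i j. smooth_on U (\<lambda>x. \<sigma> x $ i $ j)) \<and>
     (\<forall>x\<in>U. transpose (\<sigma> x) = \<sigma> x \<and> (\<forall>w. w \<noteq> 0 \<longrightarrow> w \<bullet> (\<sigma> x *v w) > 0))"

definition christoffel :: "(real^'n::finite \<Rightarrow> real^'n^'n) \<Rightarrow> real^'n \<Rightarrow> 'n \<Rightarrow> 'n \<Rightarrow> 'n \<Rightarrow> real" where
  "christoffel \<sigma> x k i j = (1/2) * (\<Sum>l\<in>UNIV. matrix_inv (\<sigma> x) $ k $ l *
      (pd i (\<lambda>y. \<sigma> y $ j $ l) x + pd j (\<lambda>y. \<sigma> y $ i $ l) x - pd l (\<lambda>y. \<sigma> y $ i $ j) x))"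

definition Du :: "(real^'n::finite \<Rightarrow> real) \<Rightarrow> real^'n \<Rightarrow> real^'n" where
  "Du u x = (\<chi> i. pd i u x)"

definition gradsq_sigma :: "(real^'n::finite \<Rightarrow> real^'n^'n) \<Rightarrow> (real^'n \<Rightarrow> real) \<Rightarrow> real^'n \<Rightarrow> real" where
  "gradsq_sigma \<sigma> u x = Du u x \<bullet> (matrix_inv (\<sigma> x) *v Du u x)"

definition vfun :: "(real^'n::finite \<Rightarrow> real^'n^'n) \<Rightarrow> (real^'n \<Rightarrow> real) \<Rightarrow> real^'n \<Rightarrow> real" where
  "vfun \<sigma> u x = 1 / sqrt (1 - gradsq_sigma \<sigma> u x)"

definition gind :: "(real^'n::finite \<Rightarrow> real^'n^'n) \<Rightarrow> (real^'n \<Rightarrow> real) \<Rightarrow> real^'n \<Rightarrow> real^'n^'n" where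
  "gind \<sigma> u x = (\<chi> i j. \<sigma> x $ i $ j - pd i u x * pd j u x)"

definition ginv :: "(real^'n::finite \<Rightarrow> real^'n^'n) \<Rightarrow> (real^'n \<Rightarrow> real) \<Rightarrow> real^'n \<Rightarrow> real^'n^'n" where
  "ginv \<sigma> u x = matrix_inv (gind \<sigma> u x)"

text \<open>Ambient Lorentzian product metric h = sigma - (dx^0)^2 on M x R, acting on tangent
vectors (w, a) at a point over x (w the M-part, a the dx^0-part).\<close>
definition hprod :: "(real^'n::finite \<Rightarrow> real^'n^'n) \<Rightarrow> real^'n \<Rightarrow> (real^'n) \<times> real \<Rightarrow> (real^'n) \<times> real \<Rightarrow> real" where
  "hprod \<sigma> x p q = fst p \<bullet> (\<sigma> x *v fst q) - snd p * snd q"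

text \<open>Unit (timelike) normal of graph u: nu = v (sigma^ij u_j d_i + d_0);
h(nu, F_k) = 0 for F_k = d_k + u_k d_0 and h(nu,nu) = -1.\<close>
definition unormal :: "(real^'n::finite \<Rightarrow> real^'n^'n) \<Rightarrow> (real^'n \<Rightarrow> real) \<Rightarrow> real^'n \<Rightarrow> (real^'n) \<times> real" where
  "unormal \<sigma> u x = (vfun \<sigma> u x *\<^sub>R (matrix_inv (\<sigma> x) *v Du u x), vfun \<sigma> u x)"

text \<open>Second fundamental form A_ij = h(nabla^h_{F_i} F_j, nu) of the embedding
F(x) = (x, u(x)).  For the product metric h the only nonzero Christoffel symbols are
those of sigma, so nabla^h_{F_i} F_j = Gamma^k_ij d_k + (d_i d_j u) d_0.\<close>
definition secff :: "(real^'n::finite \<Rightarrow> real^'n^'n) \<Rightarrow> (real^'n \<Rightarrow> real) \<Rightarrow> real^'n \<Rightarrow> 'n \<Rightarrow> 'n \<Rightarrow> real" where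
  "secff \<sigma> u x i j = hprod \<sigma> x ((\<chi> k. christoffel \<sigma> x k i j), pd i (pd j u) x) (unormal \<sigma> u x)"

definition normA :: "(real^'n::finite \<Rightarrow> real^'n^'n) \<Rightarrow> (real^'n \<Rightarrow> real) \<Rightarrow> real^'n \<Rightarrow> real" where
  "normA \<sigma> u x = sqrt (\<Sum>i\<in>UNIV. \<Sum>j\<in>UNIV. \<Sum>k\<in>UNIV. \<Sum>l\<in>UNIV.
      ginv \<sigma> u x $ i $ k * ginv \<sigma> u x $ j $ l * secff \<sigma> u x i j * secff \<sigma> u x k l)"

definition ginner_grad :: "(real^'n::finite \<Rightarrow> real^'n^'n) \<Rightarrow> (real^'n \<Rightarrow> real) \<Rightarrow>
    (real^'n \<Rightarrow> real) \<Rightarrow> (real^'n \<Rightarrow> real) \<Rightarrow> real^'n \<Rightarrow> real" where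
  "ginner_grad \<sigma> u f h x = (\<Sum>i\<in>UNIV. \<Sum>j\<in>UNIV. ginv \<sigma> u x $ i $ j * pd i f x * pd j h x)"

end

theory Submission
  imports Defs
begin


lemma chol_set:
  fixes G :: "'a \<Rightarrow> 'a \<Rightarrow> real"
  assumes "finite I"
  shows "(\<forall>i k. G i k = G k i) \<Longrightarrow>
    (\<forall>x. (\<forall>i. i \<notin> I \<longrightarrow> x i = 0) \<longrightarrow> (\<exists>i\<in>I. x i \<noteq> 0) \<longrightarrow> (\<Sum>i\<in>I. \<Sum>k\<in>I. G i k * x i * x k) > 0)
    \<Longrightarrow> \<exists>r. \<forall>i\<in>I. \<forall>k\<in>I. G i k = (\<Sum>m\<in>I. r i m * r k m)"
  using assms
proof (induction I arbitrary: G rule: finite_induct)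
  case empty
  then show ?case by auto
next
  case (insert m I)
  note sym = insert.prems(1)
  note pos = insert.prems(2)
  define a where "a = G m m"
  have a_pos: "a > 0"
  proof -
    have "(\<Sum>i\<in>insert m I. \<Sum>k\<in>insert m I. G i k * (if i = m then 1 else 0) * (if k = m then 1 else 0)) > 0"
      using pos[rule_format, of "\<lambda>i. if i = m then 1 else 0"] by auto
    moreover have "(\<Sum>i\<in>insert m I. \<Sum>k\<in>insert m I. G i k * (if i = m then (1::real) else 0) * (if k = m then 1 else 0)) = G m m"
    proof -
      have h: "\<And>i. i \<in> I \<Longrightarrow> i \<noteq> m" using insert.hyps by auto
      show ?thesis using insert.hyps by (simp add: h cong: sum.cong)
    qed
    ultimately show ?thesis by (simp add: a_def)
  qed
  define G' where "G' i k = G i k - G i m * G m k / a" for i k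
  have sym': "\<forall>i k. G' i k = G' k i" using sym by (auto simp: G'_def)
  have pos': "\<forall>x. (\<forall>i. i \<notin> I \<longrightarrow> x i = 0) \<longrightarrow> (\<exists>i\<in>I. x i \<noteq> 0) \<longrightarrow> (\<Sum>i\<in>I. \<Sum>k\<in>I. G' i k * x i * x k) > 0"
  proof (intro allI impI)
    fix x :: "'a \<Rightarrow> real"
    assume xs: "\<forall>i. i \<notin> I \<longrightarrow> x i = 0" and xn: "\<exists>i\<in>I. x i \<noteq> 0"
    define c where "c = (\<Sum>k\<in>I. G m k * x k)"
    define y where "y = x(m := - c / a)"
    have ys: "\<forall>i. i \<notin> insert m I \<longrightarrow> y i = 0" using xs by (auto simp: y_def)
    have yn: "\<exists>i\<in>insert m I. y i \<noteq> 0" using xn insert.hyps by (auto simp: y_def)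
    have yI: "\<And>i. i \<in> I \<Longrightarrow> y i = x i" using insert.hyps by (auto simp: y_def)
    have ym: "y m = - c / a" by (simp add: y_def)
    have c2: "(\<Sum>i\<in>I. G i m * x i) = c" unfolding c_def using sym by (metis (no_types, lifting) sum.cong)
    have "(\<Sum>i\<in>insert m I. \<Sum>k\<in>insert m I. G i k * y i * y k)
        = G m m * y m * y m + y m * (\<Sum>k\<in>I. G m k * x k) + y m * (\<Sum>i\<in>I. G i m * x i)
          + (\<Sum>i\<in>I. \<Sum>k\<in>I. G i k * x i * x k)"
      using insert.hyps yI
      by (simp add: sum.distrib sum_distrib_left algebra_simps cong: sum.cong)
    also have "\<dots> = G m m * y m * y m + y m * c + y m * c + (\<Sum>i\<in>I. \<Sum>k\<in>I. G i k * x i * x k)"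
      by (simp only: c2 flip: c_def)
    also have "\<dots> = (\<Sum>i\<in>I. \<Sum>k\<in>I. G i k * x i * x k) - c * c / a"
      using a_pos by (simp add: ym a_def[symmetric] field_simps power2_eq_square)
    also have "\<dots> = (\<Sum>i\<in>I. \<Sum>k\<in>I. G' i k * x i * x k)"
    proof -
      have "(\<Sum>i\<in>I. \<Sum>k\<in>I. G i m * G m k / a * x i * x k) = (\<Sum>i\<in>I. G i m * x i) * (\<Sum>k\<in>I. G m k * x k) / a"
        by (simp add: sum_product sum_divide_distrib mult_ac)
      moreover have "(\<Sum>i\<in>I. \<Sum>k\<in>I. G' i k * x i * x k) = (\<Sum>i\<in>I. \<Sum>k\<in>I. G i k * x i * x k) - (\<Sum>i\<in>I. \<Sum>k\<in>I. G i m * G m k / a * x i * x k)"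
        by (simp add: G'_def left_diff_distrib sum_subtractf)
      ultimately show ?thesis by (simp only: c2 flip: c_def)
    qed
    finally show "(\<Sum>i\<in>I. \<Sum>k\<in>I. G' i k * x i * x k) > 0"
      using pos[THEN spec[where x=y]] ys yn by simp
  qed
  obtain r where r: "\<forall>i\<in>I. \<forall>k\<in>I. G' i k = (\<Sum>j\<in>I. r i j * r k j)"
    using insert.IH[OF sym' pos'] by blast
  define r' where "r' i j = (if j = m then (if i = m then sqrt a else G i m / sqrt a)
      else (if i = m then 0 else r i j))" for i j
  have "\<forall>i\<in>insert m I. \<forall>k\<in>insert m I. G i k = (\<Sum>j\<in>insert m I. r' i j * r' k j)"
  proof (intro ballI)
    fix i k assume i: "i \<in> insert m I" and k: "k \<in> insert m I"
    have eq: "(\<Sum>j\<in>insert m I. r' i j * r' k j) = r' i m * r' k m + (\<Sum>j\<in>I. r' i j * r' k j)"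
      using insert.hyps by simp
    have rI: "\<And>i j. j \<in> I \<Longrightarrow> r' i j = (if i = m then 0 else r i j)"
      using insert.hyps by (auto simp: r'_def)
    have eq2: "(\<Sum>j\<in>I. r' i j * r' k j) = (\<Sum>j\<in>I. (if i = m then 0 else r i j) * (if k = m then 0 else r k j))"
      by (simp add: rI)
    have sa: "sqrt a * sqrt a = a" using a_pos by simp
    have sa0: "sqrt a \<noteq> 0" using a_pos by simp
    have "G i k = r' i m * r' k m + (\<Sum>j\<in>I. (if i = m then 0 else r i j) * (if k = m then 0 else r k j))"
    proof (cases "i = m")
      case True
      then show ?thesis
      proof (cases "k = m")
        case True
        then show ?thesis using \<open>i = m\<close> sa by (simp add: r'_def a_def)
      next
        case False
        then show ?thesis using \<open>i = m\<close> sa0 sym by (simp add: r'_def)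
      qed
    next
      case False
      then have iI: "i \<in> I" using i by auto
      show ?thesis
      proof (cases "k = m")
        case True
        then show ?thesis using \<open>i \<noteq> m\<close> sa0 sym by (simp add: r'_def)
      next
        case False
        then have kI: "k \<in> I" using k by auto
        have "G' i k = (\<Sum>j\<in>I. r i j * r k j)" using r iI kI by blast
        then show ?thesis using \<open>i \<noteq> m\<close> \<open>k \<noteq> m\<close> sa0 sa sym
          by (simp add: r'_def G'_def field_simps)
      qed
    qed
    then show "G i k = (\<Sum>j\<in>insert m I. r' i j * r' k j)" by (simp only: eq eq2)
  qed
  then show ?case by blast
qed



lemma quad_form_eq:
  fixes M :: "real^'n::finite^'n" and y z :: "real^'n"
  shows "y \<bullet> (M *v z) = (\<Sum>a\<in>UNIV. \<Sum>b\<in>UNIV. y$a * M$a$b * z$b)"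
  by (simp add: inner_vec_def matrix_vector_mult_def sum_distrib_left mult.assoc)

lemma sum4_swap:
  "(\<Sum>a\<in>A. \<Sum>b\<in>B. \<Sum>c\<in>C. \<Sum>d\<in>D. f a b c d) = (\<Sum>c\<in>C. \<Sum>d\<in>D. \<Sum>a\<in>A. \<Sum>b\<in>B. f a b c d)"
proof -
  have "(\<Sum>a\<in>A. \<Sum>b\<in>B. \<Sum>c\<in>C. \<Sum>d\<in>D. f a b c d) = (\<Sum>a\<in>A. \<Sum>c\<in>C. \<Sum>b\<in>B. \<Sum>d\<in>D. f a b c d)"
    by (intro sum.cong refl sum.swap)
  also have "\<dots> = (\<Sum>c\<in>C. \<Sum>a\<in>A. \<Sum>b\<in>B. \<Sum>d\<in>D. f a b c d)" by (rule sum.swap)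
  also have "\<dots> = (\<Sum>c\<in>C. \<Sum>a\<in>A. \<Sum>d\<in>D. \<Sum>b\<in>B. f a b c d)" by (intro sum.cong refl sum.swap)
  also have "\<dots> = (\<Sum>c\<in>C. \<Sum>d\<in>D. \<Sum>a\<in>A. \<Sum>b\<in>B. f a b c d)" by (intro sum.cong refl sum.swap)
  finally show ?thesis .
qed

lemma sum3_swap:
  "(\<Sum>a\<in>A. \<Sum>b\<in>B. \<Sum>c\<in>C. f a b c) = (\<Sum>c\<in>C. \<Sum>a\<in>A. \<Sum>b\<in>B. f a b c)"
proof -
  have "(\<Sum>a\<in>A. \<Sum>b\<in>B. \<Sum>c\<in>C. f a b c) = (\<Sum>a\<in>A. \<Sum>c\<in>C. \<Sum>b\<in>B. f a b c)"
    by (intro sum.cong refl sum.swap)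
  also have "\<dots> = (\<Sum>c\<in>C. \<Sum>a\<in>A. \<Sum>b\<in>B. f a b c)" by (rule sum.swap)
  finally show ?thesis .
qed

lemma chol_mat:
  fixes G :: "real^'n::finite^'n"
  assumes "transpose G = G" "\<forall>w. w \<noteq> 0 \<longrightarrow> w \<bullet> (G *v w) > 0"
  shows "\<exists>R::real^'n^'n. \<forall>i k. G$i$k = (\<Sum>m\<in>UNIV. R$i$m * R$k$m)"
proof -
  have sym: "\<forall>i k. G$i$k = G$k$i" using assms(1)
    by (metis transpose_def vec_lambda_beta)
  have pos: "\<forall>x. (\<forall>i. i \<notin> (UNIV::'n set) \<longrightarrow> x i = 0) \<longrightarrow> (\<exists>i\<in>UNIV. x i \<noteq> 0) \<longrightarrow>
      (\<Sum>i\<in>UNIV. \<Sum>k\<in>UNIV. G$i$k * x i * x k) > 0"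
  proof (intro allI impI)
    fix x :: "'n \<Rightarrow> real" assume "\<exists>i\<in>UNIV. x i \<noteq> 0"
    then have "vec_lambda x \<noteq> 0" by (auto simp: vec_eq_iff)
    then have "vec_lambda x \<bullet> (G *v vec_lambda x) > 0" using assms(2) by blast
    then show "(\<Sum>i\<in>UNIV. \<Sum>k\<in>UNIV. G$i$k * x i * x k) > 0"
      by (simp add: quad_form_eq mult_ac)
  qed
  obtain r :: "'n \<Rightarrow> 'n \<Rightarrow> real" where r: "\<forall>i\<in>UNIV. \<forall>k\<in>UNIV. G$i$k = (\<Sum>m\<in>UNIV. r i m * r k m)"
    using chol_set[of "UNIV::'n set" "\<lambda>i k. G$i$k", OF finite_class.finite_UNIV sym pos] by blast
  show ?thesis by (rule exI[of _ "\<chi> i m. r i m"]) (simp add: r)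
qed

lemma cs_bilinear:
  fixes G R :: "real^'n::finite^'n" and A :: "'n \<Rightarrow> 'n \<Rightarrow> real" and p :: "real^'n"
  assumes R: "\<forall>i k. G$i$k = (\<Sum>m\<in>UNIV. R$i$m * R$k$m)"
  defines "xi \<equiv> (\<lambda>j. \<Sum>i\<in>UNIV. G$i$j * p$i)"
  shows "\<bar>\<Sum>j\<in>UNIV. \<Sum>a\<in>UNIV. xi j * xi a * A j a\<bar>
     \<le> sqrt (\<Sum>i\<in>UNIV. \<Sum>j\<in>UNIV. \<Sum>k\<in>UNIV. \<Sum>l\<in>UNIV. G$i$k * G$j$l * A i j * A k l)
        * (\<Sum>i\<in>UNIV. \<Sum>j\<in>UNIV. G$i$j * p$i * p$j)"
proof -
  define q where "q m = (\<Sum>k\<in>UNIV. R$k$m * p$k)" for m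
  define Ah where "Ah m m' = (\<Sum>i\<in>UNIV. \<Sum>j\<in>UNIV. R$i$m * R$j$m' * A i j)" for m m'
  have xi: "xi j = (\<Sum>m\<in>UNIV. R$j$m * q m)" for j
    unfolding xi_def q_def R[rule_format] sum_distrib_left sum_distrib_right
    by (subst sum.swap) (simp add: mult_ac)
  have e1: "(\<Sum>j\<in>UNIV. \<Sum>a\<in>UNIV. xi j * xi a * A j a) = (\<Sum>m\<in>UNIV. \<Sum>m'\<in>UNIV. (q m * q m') * Ah m m')"
  proof -
    have "(\<Sum>j\<in>UNIV. \<Sum>a\<in>UNIV. xi j * xi a * A j a) = (\<Sum>j\<in>UNIV. \<Sum>a\<in>UNIV. \<Sum>m'\<in>UNIV. \<Sum>m\<in>UNIV. (q m * q m') * (R$j$m * R$a$m' * A j a))"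
      by (simp add: xi sum_distrib_left sum_distrib_right mult_ac)
    also have "\<dots> = (\<Sum>m'\<in>UNIV. \<Sum>m\<in>UNIV. \<Sum>j\<in>UNIV. \<Sum>a\<in>UNIV. (q m * q m') * (R$j$m * R$a$m' * A j a))"
      by (rule sum4_swap)
    also have "\<dots> = (\<Sum>m'\<in>UNIV. \<Sum>m\<in>UNIV. (q m * q m') * Ah m m')"
      by (simp add: Ah_def sum_distrib_left mult_ac)
    also have "\<dots> = (\<Sum>m\<in>UNIV. \<Sum>m'\<in>UNIV. (q m * q m') * Ah m m')"
      by (rule sum.swap)
    finally show ?thesis .
  qed
  define B where "B i m' = (\<Sum>j\<in>UNIV. R$j$m' * A i j)" for i m'
  have C: "(\<Sum>j\<in>UNIV. \<Sum>l\<in>UNIV. G$j$l * A i j * A k l) = (\<Sum>m'\<in>UNIV. B i m' * B k m')" for i k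
  proof -
    have "(\<Sum>j\<in>UNIV. \<Sum>l\<in>UNIV. G$j$l * A i j * A k l) = (\<Sum>j\<in>UNIV. \<Sum>l\<in>UNIV. \<Sum>m'\<in>UNIV. (R$j$m' * A i j) * (R$l$m' * A k l))"
      by (simp add: R[rule_format] sum_distrib_left sum_distrib_right mult_ac)
    also have "\<dots> = (\<Sum>m'\<in>UNIV. \<Sum>j\<in>UNIV. \<Sum>l\<in>UNIV. (R$j$m' * A i j) * (R$l$m' * A k l))"
      by (rule sum3_swap)
    also have "\<dots> = (\<Sum>m'\<in>UNIV. B i m' * B k m')"
      by (simp add: B_def sum_product)
    finally show ?thesis .
  qed
  have e2: "(\<Sum>i\<in>UNIV. \<Sum>j\<in>UNIV. \<Sum>k\<in>UNIV. \<Sum>l\<in>UNIV. G$i$k * G$j$l * A i j * A k l)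
      = (\<Sum>m\<in>UNIV. \<Sum>m'\<in>UNIV. (Ah m m')\<^sup>2)"
  proof -
    have "(\<Sum>i\<in>UNIV. \<Sum>j\<in>UNIV. \<Sum>k\<in>UNIV. \<Sum>l\<in>UNIV. G$i$k * G$j$l * A i j * A k l)
       = (\<Sum>i\<in>UNIV. \<Sum>k\<in>UNIV. \<Sum>j\<in>UNIV. \<Sum>l\<in>UNIV. G$i$k * (G$j$l * A i j * A k l))"
      by (rule sum.cong[OF refl]) (subst sum.swap, simp add: mult.assoc)
    also have "\<dots> = (\<Sum>i\<in>UNIV. \<Sum>k\<in>UNIV. G$i$k * (\<Sum>m'\<in>UNIV. B i m' * B k m'))"
      by (simp add: C sum_distrib_left[symmetric])
    also have "\<dots> = (\<Sum>i\<in>UNIV. \<Sum>k\<in>UNIV. \<Sum>m\<in>UNIV. \<Sum>m'\<in>UNIV. (R$i$m * B i m') * (R$k$m * B k m'))"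
      by (simp add: R[rule_format] sum_distrib_left sum_distrib_right mult_ac)
    also have "\<dots> = (\<Sum>m\<in>UNIV. \<Sum>m'\<in>UNIV. \<Sum>i\<in>UNIV. \<Sum>k\<in>UNIV. (R$i$m * B i m') * (R$k$m * B k m'))"
      by (rule sum4_swap)
    also have "\<dots> = (\<Sum>m\<in>UNIV. \<Sum>m'\<in>UNIV. (Ah m m')\<^sup>2)"
      by (simp add: Ah_def B_def sum_product power2_eq_square sum_distrib_left mult_ac)
    finally show ?thesis .
  qed
  have e3: "(\<Sum>i\<in>UNIV. \<Sum>j\<in>UNIV. G$i$j * p$i * p$j) = (\<Sum>m\<in>UNIV. (q m)\<^sup>2)"
  proof -
    have "(\<Sum>i\<in>UNIV. \<Sum>j\<in>UNIV. G$i$j * p$i * p$j) = (\<Sum>i\<in>UNIV. \<Sum>j\<in>UNIV. \<Sum>m\<in>UNIV. (R$i$m * p$i) * (R$j$m * p$j))"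
      by (simp add: R[rule_format] sum_distrib_left sum_distrib_right mult_ac)
    also have "\<dots> = (\<Sum>m\<in>UNIV. \<Sum>i\<in>UNIV. \<Sum>j\<in>UNIV. (R$i$m * p$i) * (R$j$m * p$j))"
      by (rule sum3_swap)
    also have "\<dots> = (\<Sum>m\<in>UNIV. (q m)\<^sup>2)"
      by (simp add: q_def sum_product power2_eq_square)
    finally show ?thesis .
  qed
  define X where "X = (\<Sum>m\<in>UNIV. \<Sum>m'\<in>UNIV. (q m * q m') * Ah m m')"
  define P where "P = (\<Sum>m\<in>UNIV. (q m)\<^sup>2)"
  define Q where "Q = (\<Sum>m\<in>UNIV. \<Sum>m'\<in>UNIV. (Ah m m')\<^sup>2)"
  have "X\<^sup>2 \<le> (\<Sum>m\<in>UNIV. \<Sum>m'\<in>UNIV. (q m * q m')\<^sup>2) * Q"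
    using Cauchy_Schwarz_ineq_sum[of "\<lambda>(m,m'). q m * q m'" "\<lambda>(m,m'). Ah m m'" "UNIV \<times> UNIV"]
    by (simp add: X_def Q_def sum.cartesian_product case_prod_beta)
  also have "(\<Sum>m\<in>UNIV. \<Sum>m'\<in>UNIV. (q m * q m')\<^sup>2) = P\<^sup>2"
    by (simp add: P_def power2_eq_square sum_product mult_ac)
  finally have X2: "X\<^sup>2 \<le> P\<^sup>2 * Q" .
  have P0: "P \<ge> 0" unfolding P_def by (simp add: sum_nonneg)
  have "\<bar>X\<bar> = sqrt (X\<^sup>2)" by simp
  also have "\<dots> \<le> sqrt (P\<^sup>2 * Q)" using X2 by (rule real_sqrt_le_mono)
  also have "\<dots> = sqrt Q * P" using P0 by (simp add: real_sqrt_mult)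
  finally show ?thesis using e1 e2 e3 by (simp add: X_def P_def Q_def)
qed



lemma sym_entry: "transpose (M::'a::semiring_1^'n^'n) = M \<Longrightarrow> M$i$j = M$j$i"
  by (metis transpose_def vec_lambda_beta)

lemma sym_inner:
  fixes M :: "real^'n::finite^'n"
  assumes "transpose M = M"
  shows "x \<bullet> (M *v y) = (M *v x) \<bullet> y"
  by (metis assms dot_lmul_matrix transpose_matrix_vector)

lemma pd_inv:
  fixes M :: "real^'n::finite^'n"
  assumes pd: "\<forall>w. w \<noteq> 0 \<longrightarrow> w \<bullet> (M *v w) > 0"
  shows "M ** matrix_inv M = mat 1 \<and> matrix_inv M ** M = mat 1"
proof -
  have "inj ((*v) M)"
  proof (rule injI)
    fix a b assume "M *v a = M *v b"
    then have "M *v (a - b) = 0" by (simp add: matrix_vector_mult_diff_distrib)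
    then show "a = b" using pd[rule_format, of "a - b"] by auto
  qed
  then have "invertible M" using matrix_left_invertible_injective invertible_left_inverse by blast
  then have "\<exists>A'. M ** A' = mat 1 \<and> A' ** M = mat 1" by (simp add: invertible_def)
  then show ?thesis unfolding matrix_inv_def by (rule someI_ex)
qed

lemma inv_sym:
  fixes M Mi :: "real^'n::finite^'n"
  assumes "transpose M = M" "M ** Mi = mat 1" "Mi ** M = mat 1"
  shows "transpose Mi = Mi"
proof -
  have "transpose Mi ** M = mat 1"
    by (metis assms(1,2) matrix_transpose_mul transpose_mat)
  then have "transpose Mi = (transpose Mi ** M) ** Mi"
    by (metis assms(2) matrix_mul_assoc matrix_mul_rid)
  then show ?thesis using \<open>transpose Mi ** M = mat 1\<close> by simp
qed

lemma cs_form: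
  fixes S R :: "real^'n::finite^'n"
  assumes R: "\<forall>i k. S$i$k = (\<Sum>m\<in>UNIV. R$i$m * R$k$m)"
  shows "(a \<bullet> (S *v b))\<^sup>2 \<le> (a \<bullet> (S *v a)) * (b \<bullet> (S *v b))"
proof -
  have e: "c \<bullet> (S *v d) = (\<Sum>m\<in>UNIV. (\<Sum>i\<in>UNIV. R$i$m * c$i) * (\<Sum>k\<in>UNIV. R$k$m * d$k))" for c d
  proof -
    have "c \<bullet> (S *v d) = (\<Sum>i\<in>UNIV. \<Sum>k\<in>UNIV. \<Sum>m\<in>UNIV. (R$i$m * c$i) * (R$k$m * d$k))"
      by (simp add: quad_form_eq R[rule_format] sum_distrib_left sum_distrib_right mult_ac)
    also have "\<dots> = (\<Sum>m\<in>UNIV. \<Sum>i\<in>UNIV. \<Sum>k\<in>UNIV. (R$i$m * c$i) * (R$k$m * d$k))"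
      by (rule sum3_swap)
    also have "\<dots> = (\<Sum>m\<in>UNIV. (\<Sum>i\<in>UNIV. R$i$m * c$i) * (\<Sum>k\<in>UNIV. R$k$m * d$k))"
      by (simp add: sum_product)
    finally show ?thesis .
  qed
  show ?thesis unfolding e
    using Cauchy_Schwarz_ineq_sum by (simp add: power2_eq_square)
qed



lemma pointwise:
  fixes \<sigma> :: "real^'n::finite \<Rightarrow> real^'n^'n" and u :: "real^'n \<Rightarrow> real"
  assumes Ssym: "transpose (\<sigma> x) = \<sigma> x"
    and Spd: "\<forall>w. w \<noteq> 0 \<longrightarrow> w \<bullet> (\<sigma> x *v w) > 0"
    and s1: "gradsq_sigma \<sigma> u x < 1"
    and hv: "\<forall>j. pd j (vfun \<sigma> u) x = vfun \<sigma> u x ^ 3 *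
        ((\<Sum>a\<in>UNIV. (matrix_inv (\<sigma> x) *v Du u x)$a * pd j (pd a u) x)
         - 1/2 * (\<Sum>a\<in>UNIV. \<Sum>b\<in>UNIV. (matrix_inv (\<sigma> x) *v Du u x)$a * (matrix_inv (\<sigma> x) *v Du u x)$b
                 * pd j (\<lambda>y. \<sigma> y $ a $ b) x))"
  shows "\<bar>ginner_grad \<sigma> u u (vfun \<sigma> u) x\<bar> \<le> normA \<sigma> u x * ginner_grad \<sigma> u u u x"
proof -
  define S where "S = \<sigma> x"
  define Si where "Si = matrix_inv S"
  define p where "p = Du u x"
  define w where "w = Si *v p"
  define s where "s = gradsq_sigma \<sigma> u x"
  define v where "v = vfun \<sigma> u x"
  have s_eq: "s = p \<bullet> w" by (simp add: s_def gradsq_sigma_def p_def w_def Si_def S_def)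
  have v_eq: "v = 1 / sqrt (1 - s)" by (simp add: v_def vfun_def s_def)
  have s1': "s < 1" using s1 s_def by simp
  have v_pos: "v > 0" using s1' v_eq by simp
  have v2: "v\<^sup>2 * (1 - s) = 1" using s1' v_eq by (simp add: power_divide)
  have SSi: "S ** Si = mat 1 \<and> Si ** S = mat 1" using pd_inv[OF Spd] by (simp add: Si_def S_def)
  have Sw: "S *v w = p" using SSi by (simp add: w_def matrix_vector_mul_assoc)
  have Sisym: "transpose Si = Si" using inv_sym[OF Ssym[folded S_def]] SSi by blast
  have pi: "p$i = pd i u x" for i by (simp add: p_def Du_def)
  obtain RS :: "real^'n^'n" where RS: "\<forall>i k. S$i$k = (\<Sum>m\<in>UNIV. RS$i$m * RS$k$m)"
    using chol_mat[OF Ssym Spd] S_def by blast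
  define gm where "gm = gind \<sigma> u x"
  have gm_e: "gm$i$j = S$i$j - p$i * p$j" for i j by (simp add: gm_def gind_def S_def pi)
  have gm_sym: "transpose gm = gm"
    using sym_entry[OF Ssym[folded S_def]] by (simp add: vec_eq_iff transpose_def gm_e mult.commute)
  have gm_w: "gm *v w = (1 - s) *\<^sub>R p"
  proof -
    have "(gm *v w)$i = (S *v w)$i - p$i * (p \<bullet> w)" for i
      by (simp add: matrix_vector_mult_def gm_e right_diff_distrib left_diff_distrib sum_subtractf inner_vec_def sum_distrib_left mult_ac)
    then show ?thesis using Sw s_eq by (simp add: vec_eq_iff algebra_simps)
  qed
  have gm_quad: "y \<bullet> (gm *v y) = y \<bullet> (S *v y) - (p \<bullet> y)\<^sup>2" for y
  proof -
    have "y \<bullet> (gm *v y) = (\<Sum>a\<in>UNIV. \<Sum>b\<in>UNIV. y$a * S$a$b * y$b) - (\<Sum>a\<in>UNIV. \<Sum>b\<in>UNIV. (p$a * y$a) * (p$b * y$b))"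
      by (simp add: quad_form_eq gm_e algebra_simps sum_subtractf)
    then show ?thesis unfolding quad_form_eq[of y S y] power2_eq_square by (simp add: inner_vec_def sum_product)
  qed
  have py: "(p \<bullet> y)\<^sup>2 \<le> s * (y \<bullet> (S *v y))" for y
  proof -
    have "p \<bullet> y = w \<bullet> (S *v y)" using sym_inner[OF Ssym[folded S_def], of w y] Sw by simp
    moreover have "s = w \<bullet> (S *v w)" using Sw s_eq by (simp add: inner_commute)
    ultimately show ?thesis using cs_form[OF RS, of w y] by simp
  qed
  have gm_pd: "\<forall>y. y \<noteq> 0 \<longrightarrow> y \<bullet> (gm *v y) > 0"
  proof (intro allI impI)
    fix y :: "real^'n" assume "y \<noteq> 0"
    then have "y \<bullet> (S *v y) > 0" using Spd S_def by simp
    then have "s * (y \<bullet> (S *v y)) < y \<bullet> (S *v y)" using s1' by simp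
    then show "y \<bullet> (gm *v y) > 0" using py[of y] gm_quad[of y] by linarith
  qed
  define G where "G = ginv \<sigma> u x"
  have gG: "gm ** G = mat 1 \<and> G ** gm = mat 1" using pd_inv[OF gm_pd] by (simp add: G_def ginv_def gm_def)
  have Gsym: "transpose G = G" using inv_sym[OF gm_sym] gG by blast
  have G_pd: "\<forall>z. z \<noteq> 0 \<longrightarrow> z \<bullet> (G *v z) > 0"
  proof (intro allI impI)
    fix z :: "real^'n" assume z: "z \<noteq> 0"
    define y where "y = G *v z"
    have gy: "gm *v y = z" using gG by (simp add: y_def matrix_vector_mul_assoc)
    have "y \<noteq> 0" using gy z by auto
    then have "y \<bullet> (gm *v y) > 0" using gm_pd by blast
    moreover have "z \<bullet> (G *v z) = y \<bullet> (gm *v y)" using gy by (simp add: y_def inner_commute)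
    ultimately show "z \<bullet> (G *v z) > 0" by simp
  qed
  obtain RG :: "real^'n^'n" where RG: "\<forall>i k. G$i$k = (\<Sum>m\<in>UNIV. RG$i$m * RG$k$m)"
    using chol_mat[OF Gsym G_pd] by blast
  define xi where "xi = (\<lambda>j. \<Sum>i\<in>UNIV. G$i$j * p$i)"
  have xi_w: "xi j = v\<^sup>2 * w$j" for j
  proof -
    have "w = G *v (gm *v w)" using gG by (simp add: matrix_vector_mul_assoc)
    then have "w = (1 - s) *\<^sub>R (G *v p)" by (simp add: gm_w matrix_vector_mult_scaleR)
    then have vw: "v\<^sup>2 *\<^sub>R w = (G *v p)" using v2 by (simp add: scaleR_scaleR)
    have "xi j = (G *v p)$j"
    proof -
      have "xi j = (\<Sum>i\<in>UNIV. G$j$i * p$i)"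
        unfolding xi_def by (intro sum.cong refl arg_cong2[where f="(*)"] sym_entry[OF Gsym])
      then show ?thesis by (simp add: matrix_vector_mult_def)
    qed
    also have "\<dots> = (v\<^sup>2 *\<^sub>R w)$j" by (simp only: vw)
    finally show ?thesis by simp
  qed
  define DS where "DS = (\<lambda>j a b. pd j (\<lambda>y. \<sigma> y $ a $ b) x)"
  define A where "A = secff \<sigma> u x"
  have A_e: "A j a = v * ((\<Sum>k\<in>UNIV. christoffel \<sigma> x k j a * p$k) - pd j (pd a u) x)" for j a
  proof -
    have h: "\<sigma> x *v (matrix_inv (\<sigma> x) *v Du u x) = p"
      using Sw by (simp add: w_def Si_def S_def p_def)
    have "A j a = (\<chi> k. christoffel \<sigma> x k j a) \<bullet> (\<sigma> x *v (v *\<^sub>R (matrix_inv (\<sigma> x) *v Du u x))) - pd j (pd a u) x * v"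
      by (simp add: A_def secff_def hprod_def unormal_def v_def)
    also have "\<dots> = (\<chi> k. christoffel \<sigma> x k j a) \<bullet> (v *\<^sub>R p) - pd j (pd a u) x * v"
      by (simp only: matrix_vector_mult_scaleR h)
    also have "\<dots> = v * ((\<Sum>k\<in>UNIV. christoffel \<sigma> x k j a * p$k) - pd j (pd a u) x)"
      by (simp add: inner_vec_def sum_distrib_left algebra_simps)
    finally show ?thesis .
  qed
  have wl: "(\<Sum>k\<in>UNIV. Si$k$l * p$k) = w$l" for l
  proof -
    have "(\<Sum>k\<in>UNIV. Si$k$l * p$k) = (\<Sum>k\<in>UNIV. Si$l$k * p$k)"
      by (intro sum.cong refl arg_cong2[where f="(*)"] sym_entry[OF Sisym])
    then show ?thesis by (simp add: w_def matrix_vector_mult_def)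
  qed
  have chr: "(\<Sum>a\<in>UNIV. w$a * (\<Sum>k\<in>UNIV. christoffel \<sigma> x k j a * p$k))
      = 1/2 * (\<Sum>a\<in>UNIV. \<Sum>b\<in>UNIV. w$a * w$b * DS j a b)" for j
  proof -
    have g1: "(\<Sum>k\<in>UNIV. christoffel \<sigma> x k j a * p$k) = 1/2 * (\<Sum>l\<in>UNIV. w$l * (DS j a l + DS a j l - DS l j a))" for a
    proof -
      define T where "T l = DS j a l + DS a j l - DS l j a" for l
      have ch: "christoffel \<sigma> x k j a = 1/2 * (\<Sum>l\<in>UNIV. Si$k$l * T l)" for k
        by (simp add: christoffel_def T_def DS_def Si_def S_def)
      have "(\<Sum>k\<in>UNIV. christoffel \<sigma> x k j a * p$k) = 1/2 * (\<Sum>k\<in>UNIV. \<Sum>l\<in>UNIV. (Si$k$l * p$k) * T l)"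
        by (simp add: ch sum_distrib_left sum_distrib_right mult_ac)
      also have "\<dots> = 1/2 * (\<Sum>l\<in>UNIV. \<Sum>k\<in>UNIV. (Si$k$l * p$k) * T l)"
        by (subst sum.swap) (rule refl)
      also have "\<dots> = 1/2 * (\<Sum>l\<in>UNIV. (\<Sum>k\<in>UNIV. Si$k$l * p$k) * T l)"
        by (simp add: sum_distrib_right)
      finally show ?thesis by (simp add: wl T_def)
    qed
    have sw: "(\<Sum>a\<in>UNIV. \<Sum>l\<in>UNIV. w$a * w$l * DS a j l) = (\<Sum>a\<in>UNIV. \<Sum>l\<in>UNIV. w$a * w$l * DS l j a)"
      by (subst sum.swap) (simp add: mult_ac)
    have "(\<Sum>a\<in>UNIV. w$a * (\<Sum>k\<in>UNIV. christoffel \<sigma> x k j a * p$k))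
       = 1/2 * ((\<Sum>a\<in>UNIV. \<Sum>l\<in>UNIV. w$a * w$l * DS j a l) + (\<Sum>a\<in>UNIV. \<Sum>l\<in>UNIV. w$a * w$l * DS a j l)
               - (\<Sum>a\<in>UNIV. \<Sum>l\<in>UNIV. w$a * w$l * DS l j a))"
    proof -
      have "(\<Sum>a\<in>UNIV. w$a * (\<Sum>k\<in>UNIV. christoffel \<sigma> x k j a * p$k))
          = (\<Sum>a\<in>UNIV. w$a * (1/2 * (\<Sum>l\<in>UNIV. w$l * (DS j a l + DS a j l - DS l j a))))"
        by (simp only: g1)
      then show ?thesis by (simp add: sum_distrib_left algebra_simps sum.distrib sum_subtractf)
    qed
    then show ?thesis using sw by simp
  qed
  have vj: "pd j (vfun \<sigma> u) x = - v\<^sup>2 * (\<Sum>a\<in>UNIV. w$a * A j a)" for j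
  proof -
    have e1: "(\<Sum>a\<in>UNIV. w$a * A j a) = v * (1/2 * (\<Sum>a\<in>UNIV. \<Sum>b\<in>UNIV. w$a * w$b * DS j a b)
          - (\<Sum>a\<in>UNIV. w$a * pd j (pd a u) x))"
    proof -
      have "(\<Sum>a\<in>UNIV. w$a * A j a) = (\<Sum>a\<in>UNIV. v * (w$a * (\<Sum>k\<in>UNIV. christoffel \<sigma> x k j a * p$k)) - v * (w$a * pd j (pd a u) x))"
        by (rule sum.cong[OF refl]) (simp only: A_e right_diff_distrib mult.left_commute)
      also have "\<dots> = v * (\<Sum>a\<in>UNIV. w$a * (\<Sum>k\<in>UNIV. christoffel \<sigma> x k j a * p$k)) - v * (\<Sum>a\<in>UNIV. w$a * pd j (pd a u) x)"
        by (simp only: sum_subtractf sum_distrib_left[symmetric])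
      also have "\<dots> = v * (1/2 * (\<Sum>a\<in>UNIV. \<Sum>b\<in>UNIV. w$a * w$b * DS j a b)) - v * (\<Sum>a\<in>UNIV. w$a * pd j (pd a u) x)"
        by (simp only: chr)
      finally show ?thesis by (simp only: right_diff_distrib)
    qed
    moreover have e2: "pd j (vfun \<sigma> u) x = v ^ 3 * ((\<Sum>a\<in>UNIV. w$a * pd j (pd a u) x)
         - 1/2 * (\<Sum>a\<in>UNIV. \<Sum>b\<in>UNIV. w$a * w$b * DS j a b))"
      unfolding v_def w_def Si_def S_def p_def DS_def using hv by blast
    ultimately show ?thesis
      by (simp only: e1 e2) (simp add: power3_eq_cube power2_eq_square algebra_simps)
  qed
  have lhs: "ginner_grad \<sigma> u u (vfun \<sigma> u) x = - (\<Sum>j\<in>UNIV. \<Sum>a\<in>UNIV. xi j * xi a * A j a)"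
  proof -
    have "ginner_grad \<sigma> u u (vfun \<sigma> u) x = (\<Sum>j\<in>UNIV. xi j * pd j (vfun \<sigma> u) x)"
      unfolding ginner_grad_def G_def[symmetric] xi_def pi[symmetric]
      by (subst sum.swap) (simp add: sum_distrib_left sum_distrib_right mult_ac)
    also have "\<dots> = - (\<Sum>j\<in>UNIV. \<Sum>a\<in>UNIV. xi j * xi a * A j a)"
      by (simp add: vj xi_w sum_distrib_left sum_negf[symmetric] mult_ac)
    finally show ?thesis .
  qed
  have rhs: "normA \<sigma> u x * ginner_grad \<sigma> u u u x =
     sqrt (\<Sum>i\<in>UNIV. \<Sum>j\<in>UNIV. \<Sum>k\<in>UNIV. \<Sum>l\<in>UNIV. G$i$k * G$j$l * A i j * A k l)
        * (\<Sum>i\<in>UNIV. \<Sum>j\<in>UNIV. G$i$j * p$i * p$j)"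
    by (simp add: normA_def ginner_grad_def G_def A_def pi)
  show ?thesis unfolding lhs rhs abs_minus_cancel xi_def
    by (rule cs_bilinear[OF RG])
qed



lemma pd_lower:
  fixes S :: "real^'n::finite^'n"
  assumes pd: "\<forall>w. w \<noteq> 0 \<longrightarrow> w \<bullet> (S *v w) > 0"
  shows "\<exists>c>0. \<forall>y. y \<bullet> (S *v y) \<ge> 2 * c * (norm y)\<^sup>2"
proof -
  have cont: "continuous_on (sphere 0 1) (\<lambda>y::real^'n. y \<bullet> (S *v y))"
    by (intro continuous_intros linear_continuous_on matrix_vector_mul_bounded_linear)
  have ne: "sphere (0::real^'n) 1 \<noteq> {}" by simp
  obtain y0 where y0: "y0 \<in> sphere 0 1" and m: "\<forall>y\<in>sphere 0 1. y0 \<bullet> (S *v y0) \<le> y \<bullet> (S *v y)"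
    using continuous_attains_inf[OF compact_sphere ne cont] by blast
  define m0 where "m0 = y0 \<bullet> (S *v y0)"
  have "y0 \<noteq> 0" using y0 by auto
  then have m0: "m0 > 0" using pd by (simp add: m0_def)
  have "y \<bullet> (S *v y) \<ge> m0 * (norm y)\<^sup>2" for y
  proof (cases "y = 0")
    case True then show ?thesis by simp
  next
    case False
    define yh where "yh = (1 / norm y) *\<^sub>R y"
    have "yh \<in> sphere 0 1" using False by (simp add: yh_def)
    then have "m0 \<le> yh \<bullet> (S *v yh)" using m by (simp add: m0_def)
    also have "yh \<bullet> (S *v yh) = (y \<bullet> (S *v y)) / (norm y)\<^sup>2"
      by (simp add: yh_def matrix_vector_mult_scaleR power2_eq_square)
    finally show ?thesis using False by (simp add: field_simps)
  qed
  then show ?thesis using m0 by (intro exI[of _ "m0/2"]) auto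
qed

lemma quad_perturb:
  fixes E :: "real^'n::finite^'n"
  shows "\<bar>y \<bullet> (E *v y)\<bar> \<le> (\<Sum>a\<in>UNIV. \<Sum>b\<in>UNIV. \<bar>E$a$b\<bar>) * (norm y)\<^sup>2"
proof -
  have "\<bar>y \<bullet> (E *v y)\<bar> \<le> (\<Sum>a\<in>UNIV. \<Sum>b\<in>UNIV. \<bar>y$a * E$a$b * y$b\<bar>)"
    unfolding quad_form_eq by (rule order_trans[OF sum_abs], rule sum_mono, rule sum_abs)
  also have "\<dots> \<le> (\<Sum>a\<in>UNIV. \<Sum>b\<in>UNIV. \<bar>E$a$b\<bar> * (norm y)\<^sup>2)"
  proof (intro sum_mono)
    fix a b
    have "\<bar>y$a\<bar> * \<bar>y$b\<bar> \<le> norm y * norm y"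
      by (intro mult_mono component_le_norm_cart) auto
    from mult_right_mono[OF this abs_ge_zero[of "E$a$b"]]
    show "\<bar>y$a * E$a$b * y$b\<bar> \<le> \<bar>E$a$b\<bar> * (norm y)\<^sup>2"
      by (simp add: abs_mult power2_eq_square mult_ac)
  qed
  also have "\<dots> = (\<Sum>a\<in>UNIV. \<Sum>b\<in>UNIV. \<bar>E$a$b\<bar>) * (norm y)\<^sup>2"
    by (simp add: sum_distrib_right)
  finally show ?thesis .
qed



lemma squeeze_pt:
  fixes St :: "real^'n::finite^'n" and Pt w0 :: "real^'n"
  assumes sym: "transpose St = St" and pd: "\<forall>w. w \<noteq> 0 \<longrightarrow> w \<bullet> (St *v w) > 0"
    and c: "c > 0" and lb: "\<forall>y. y \<bullet> (St *v y) \<ge> c * (norm y)\<^sup>2"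
  shows "0 \<le> Pt \<bullet> (matrix_inv St *v Pt) - (2 * (Pt \<bullet> w0) - w0 \<bullet> (St *v w0))
       \<and> Pt \<bullet> (matrix_inv St *v Pt) - (2 * (Pt \<bullet> w0) - w0 \<bullet> (St *v w0)) \<le> (norm (Pt - St *v w0))\<^sup>2 / c"
proof -
  have inv: "St ** matrix_inv St = mat 1" using pd_inv[OF pd] by blast
  define wt where "wt = matrix_inv St *v Pt"
  have Swt: "St *v wt = Pt" using inv by (simp add: wt_def matrix_vector_mul_assoc)
  define z where "z = wt - w0"
  define r where "r = Pt - St *v w0"
  have Sz: "St *v z = r" by (simp add: z_def r_def Swt matrix_vector_mult_diff_distrib)
  have h: "wt \<bullet> (St *v w0) = Pt \<bullet> w0" using sym_inner[OF sym, of wt w0] Swt by simp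
  have e: "Pt \<bullet> wt - (2 * (Pt \<bullet> w0) - w0 \<bullet> (St *v w0)) = z \<bullet> r"
  proof -
    have "z \<bullet> r = wt \<bullet> Pt - wt \<bullet> (St *v w0) - w0 \<bullet> Pt + w0 \<bullet> (St *v w0)"
      by (simp add: z_def r_def inner_diff_left inner_diff_right)
    then show ?thesis using h by (simp add: inner_commute)
  qed
  have lbz: "c * (norm z)\<^sup>2 \<le> z \<bullet> r" using lb Sz by metis
  have cs: "z \<bullet> r \<le> norm z * norm r" by (rule norm_cauchy_schwarz)
  have nn: "0 \<le> z \<bullet> r" using lbz c by (smt (verit) mult_nonneg_nonneg zero_le_power2)
  have up: "z \<bullet> r \<le> (norm r)\<^sup>2 / c"
  proof (cases "z = 0")
    case True then show ?thesis using c by simp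
  next
    case False
    then have nz: "norm z > 0" by simp
    have "c * norm z * norm z \<le> norm z * norm r" using lbz cs by (simp add: power2_eq_square mult_ac)
    then have "c * norm z \<le> norm r" using nz by (simp add: mult.commute)
    then have "norm z * norm r * c \<le> norm r * norm r"
      using mult_right_mono[OF \<open>c * norm z \<le> norm r\<close> norm_ge_zero[of r]] by (simp add: mult_ac)
    then have "norm z * norm r \<le> (norm r)\<^sup>2 / c" using c by (simp add: field_simps power2_eq_square)
    then show ?thesis using cs by linarith
  qed
  show ?thesis using e nn up by (simp add: wt_def r_def)
qed



lemma pd_line:
  fixes f :: "real^'n::finite \<Rightarrow> real"
  assumes "f differentiable (at x)"
  shows "((\<lambda>t. f (x + t *\<^sub>R axis i 1)) has_real_derivative pd i f x) (at 0)"
proof -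
  obtain f' where f': "(f has_derivative f') (at x)" using assms by (auto simp: differentiable_def)
  have l: "((\<lambda>t. x + t *\<^sub>R axis i 1) has_derivative (\<lambda>t. t *\<^sub>R axis i 1)) (at 0)"
    by (auto intro!: derivative_eq_intros)
  have "((\<lambda>t. f (x + t *\<^sub>R axis i 1)) has_derivative (\<lambda>t. f' (t *\<^sub>R axis i 1))) (at 0)"
    using has_derivative_compose[OF l, of f f'] f' by simp
  moreover have "(\<lambda>t. f' (t *\<^sub>R axis i 1)) = (\<lambda>t. t * f' (axis i 1))"
    using has_derivative_linear[OF f'] by (simp add: linear_scale)
  ultimately have d: "((\<lambda>t. f (x + t *\<^sub>R axis i 1)) has_real_derivative f' (axis i 1)) (at 0)"
    by (simp add: has_field_derivative_def mult_commute_abs)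
  then have "pd i f x = f' (axis i 1)" unfolding pd_def by (rule DERIV_imp_deriv)
  then show ?thesis using d by simp
qed

lemma pd_vfun:
  fixes \<sigma> :: "real^'n::finite \<Rightarrow> real^'n^'n" and u :: "real^'n \<Rightarrow> real"
  assumes U: "open U" and rm: "riem_metric_on U \<sigma>" and sm: "smooth_on U u" and xU: "x \<in> U"
    and s1: "gradsq_sigma \<sigma> u x < 1"
  shows "pd j (vfun \<sigma> u) x = vfun \<sigma> u x ^ 3 *
        ((\<Sum>a\<in>UNIV. (matrix_inv (\<sigma> x) *v Du u x)$a * pd j (pd a u) x)
         - 1/2 * (\<Sum>a\<in>UNIV. \<Sum>b\<in>UNIV. (matrix_inv (\<sigma> x) *v Du u x)$a * (matrix_inv (\<sigma> x) *v Du u x)$b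
                 * pd j (\<lambda>y. \<sigma> y $ a $ b) x))"
proof -
  define e :: "real^'n" where "e = axis j 1"
  define \<gamma> where "\<gamma> t = x + t *\<^sub>R e" for t
  define S0 where "S0 = \<sigma> x"
  define p0 where "p0 = Du u x"
  define w0 where "w0 = matrix_inv S0 *v p0"
  have Ssym: "\<And>y. y \<in> U \<Longrightarrow> transpose (\<sigma> y) = \<sigma> y" using rm by (auto simp: riem_metric_on_def)
  have Spd: "\<And>y. y \<in> U \<Longrightarrow> \<forall>w. w \<noteq> 0 \<longrightarrow> w \<bullet> (\<sigma> y *v w) > 0" using rm by (auto simp: riem_metric_on_def)
  have diff_u: "pd a u differentiable (at x)" for a
    using sm xU unfolding smooth_on_def by (metis iter_pd.simps)
  have diff_S: "(\<lambda>y. \<sigma> y $ a $ b) differentiable (at x)" for a b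
    using rm xU unfolding riem_metric_on_def smooth_on_def by (metis iter_pd.simps(1))
  have dP: "((\<lambda>t. pd a u (\<gamma> t)) has_real_derivative pd j (pd a u) x) (at 0)" for a
    unfolding \<gamma>_def e_def by (rule pd_line[OF diff_u])
  have dS: "((\<lambda>t. \<sigma> (\<gamma> t) $ a $ b) has_real_derivative pd j (\<lambda>y. \<sigma> y $ a $ b) x) (at 0)" for a b
    unfolding \<gamma>_def e_def using pd_line[OF diff_S] by blast
  have \<gamma>0: "\<gamma> 0 = x" by (simp add: \<gamma>_def)
  have evU: "\<forall>\<^sub>F t in at 0. \<gamma> t \<in> U"
  proof -
    obtain \<epsilon> where \<epsilon>: "\<epsilon> > 0" "ball x \<epsilon> \<subseteq> U" using U xU open_contains_ball by blast
    have "\<forall>t. t \<noteq> 0 \<and> dist t 0 < \<epsilon> \<longrightarrow> \<gamma> t \<in> U"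
    proof (intro allI impI)
      fix t :: real assume "t \<noteq> 0 \<and> dist t 0 < \<epsilon>"
      then have "dist x (\<gamma> t) < \<epsilon>" by (simp add: \<gamma>_def e_def dist_norm)
      then show "\<gamma> t \<in> U" using \<epsilon> by auto
    qed
    then show ?thesis unfolding eventually_at using \<epsilon> by blast
  qed
  obtain c where c: "c > 0" "\<forall>y. y \<bullet> (S0 *v y) \<ge> 2 * c * (norm y)\<^sup>2"
    using pd_lower[OF Spd[OF xU]] S0_def by blast
  define E where "E t = (\<Sum>a\<in>UNIV. \<Sum>b\<in>UNIV. \<bar>(\<sigma> (\<gamma> t) - S0)$a$b\<bar>)" for t
  have Slim: "((\<lambda>t. \<sigma> (\<gamma> t) $ a $ b) \<longlongrightarrow> S0 $ a $ b) (at 0)" for a b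
    using DERIV_isCont[OF dS[of a b]] by (simp add: isCont_def \<gamma>0 S0_def)
  have "(E \<longlongrightarrow> (\<Sum>a\<in>UNIV. \<Sum>b\<in>UNIV. \<bar>S0$a$b - S0$a$b\<bar>)) (at 0)"
    unfolding E_def vector_minus_component by (intro tendsto_intros Slim)
  then have "(E \<longlongrightarrow> 0) (at 0)" by simp
  then have evE: "\<forall>\<^sub>F t in at 0. E t < c" using c(1) by (rule order_tendstoD(2))
  define \<phi> where "\<phi> t = 2 * (Du u (\<gamma> t) \<bullet> w0) - w0 \<bullet> (\<sigma> (\<gamma> t) *v w0)" for t
  define r where "r t = Du u (\<gamma> t) - \<sigma> (\<gamma> t) *v w0" for t
  define sf where "sf t = gradsq_sigma \<sigma> u (\<gamma> t)" for t
  have key: "\<forall>\<^sub>F t in at 0. 0 \<le> sf t - \<phi> t \<and> sf t - \<phi> t \<le> (norm (r t))\<^sup>2 / c"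
    using evU evE
  proof eventually_elim
    case (elim t)
    have lb: "\<forall>y. y \<bullet> (\<sigma> (\<gamma> t) *v y) \<ge> c * (norm y)\<^sup>2"
    proof
      fix y :: "real^'n"
      have "y \<bullet> (\<sigma> (\<gamma> t) *v y) = y \<bullet> (S0 *v y) + y \<bullet> ((\<sigma> (\<gamma> t) - S0) *v y)"
        by (simp add: matrix_vector_mult_diff_rdistrib inner_diff_right)
      moreover have "\<bar>y \<bullet> ((\<sigma> (\<gamma> t) - S0) *v y)\<bar> \<le> E t * (norm y)\<^sup>2"
        unfolding E_def by (rule quad_perturb)
      moreover have "E t * (norm y)\<^sup>2 \<le> c * (norm y)\<^sup>2"
        using elim(2) by (simp add: mult_right_mono)
      ultimately show "y \<bullet> (\<sigma> (\<gamma> t) *v y) \<ge> c * (norm y)\<^sup>2" using c(2)[rule_format, of y] by linarith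
    qed
    show ?case using squeeze_pt[OF Ssym[OF elim(1)] Spd[OF elim(1)] c(1) lb, of "Du u (\<gamma> t)" w0]
      by (simp add: sf_def \<phi>_def r_def gradsq_sigma_def)
  qed
  define dP where "dP a = pd j (pd a u) x" for a
  define dSS where "dSS a b = pd j (\<lambda>y. \<sigma> y $ a $ b) x" for a b
  define \<phi>' where "\<phi>' = 2 * (\<Sum>a\<in>UNIV. dP a * w0$a) - (\<Sum>a\<in>UNIV. \<Sum>b\<in>UNIV. w0$a * dSS a b * w0$b)"
  have phi_eq: "\<phi> = (\<lambda>t. 2 * (\<Sum>a\<in>UNIV. pd a u (\<gamma> t) * w0$a) - (\<Sum>a\<in>UNIV. \<Sum>b\<in>UNIV. w0$a * \<sigma> (\<gamma> t)$a$b * w0$b))"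
    by (simp add: fun_eq_iff \<phi>_def quad_form_eq) (simp add: inner_vec_def Du_def)
  have dphi: "(\<phi> has_real_derivative \<phi>') (at 0)"
    unfolding phi_eq \<phi>'_def dP_def dSS_def
    by (intro DERIV_diff DERIV_cmult DERIV_sum DERIV_cmult_right dP dS)
  have r_comp: "r t $ a = pd a u (\<gamma> t) - (\<Sum>b\<in>UNIV. \<sigma> (\<gamma> t)$a$b * w0$b)" for t a
    by (simp add: r_def Du_def matrix_vector_mult_def)
  have dr: "((\<lambda>t. r t $ a) has_real_derivative (dP a - (\<Sum>b\<in>UNIV. dSS a b * w0$b))) (at 0)" for a
    unfolding r_comp dP_def dSS_def
    by (intro DERIV_diff DERIV_cmult DERIV_sum DERIV_cmult_right dP dS)
  have S0w0: "S0 *v w0 = p0"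
    using pd_inv[OF Spd[OF xU]] by (simp add: w0_def S0_def matrix_vector_mul_assoc)
  have "r 0 = p0 - S0 *v w0" by (simp add: r_def \<gamma>0 p0_def S0_def)
  then have r0: "r 0 = 0" using S0w0 by simp
  have sf0: "sf 0 = p0 \<bullet> w0" by (simp add: sf_def \<gamma>0 gradsq_sigma_def p0_def w0_def S0_def)
  have phi0: "\<phi> 0 = p0 \<bullet> w0"
    using S0w0 by (simp add: \<phi>_def \<gamma>0 p0_def[symmetric] S0_def[symmetric] inner_commute)
  define g where "g t = (\<Sum>a\<in>UNIV. \<bar>r t $ a / t\<bar> * \<bar>r t $ a\<bar>) / c" for t
  have glim: "(g \<longlongrightarrow> 0) (at 0)"
  proof -
    have l1: "((\<lambda>t. r t $ a / t) \<longlongrightarrow> (dP a - (\<Sum>b\<in>UNIV. dSS a b * w0$b))) (at 0)" for a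
      using dr[of a] r0 unfolding has_field_derivative_iff by simp
    have l2: "((\<lambda>t. r t $ a) \<longlongrightarrow> 0) (at 0)" for a
      using DERIV_isCont[OF dr[of a]] r0 by (simp add: isCont_def)
    have "(g \<longlongrightarrow> (\<Sum>a\<in>UNIV. \<bar>dP a - (\<Sum>b\<in>UNIV. dSS a b * w0$b)\<bar> * \<bar>0\<bar>) / c) (at 0)"
      unfolding g_def using c(1) by (intro tendsto_intros l1 l2) auto
    then show ?thesis by simp
  qed
  have ev0: "\<forall>\<^sub>F t in at (0::real). t \<noteq> 0" by (simp add: eventually_at_filter)
  have lim1: "((\<lambda>t. (sf t - \<phi> t) / t) \<longlongrightarrow> 0) (at 0)"
  proof (rule Lim_null_comparison[OF _ glim])
    show "\<forall>\<^sub>F t in at 0. norm ((sf t - \<phi> t) / t) \<le> g t"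
      using key ev0
    proof eventually_elim
      case (elim t)
      have n2: "(norm (r t))\<^sup>2 = (\<Sum>a\<in>UNIV. r t $ a * r t $ a)"
        by (simp add: power2_norm_eq_inner inner_vec_def)
      have "g t = (norm (r t))\<^sup>2 / c / \<bar>t\<bar>"
        unfolding g_def n2 using elim(2)
        by (simp add: abs_mult sum_divide_distrib abs_divide field_simps abs_mult_self_eq)
      moreover have "norm ((sf t - \<phi> t) / t) = (sf t - \<phi> t) / \<bar>t\<bar>"
        using elim(1) by (simp add: abs_divide)
      moreover have "(sf t - \<phi> t) / \<bar>t\<bar> \<le> (norm (r t))\<^sup>2 / c / \<bar>t\<bar>"
        using elim(1) by (intro divide_right_mono) auto
      ultimately show ?case by (metis real_norm_def)
    qed
  qed
  have de: "((\<lambda>t. sf t - \<phi> t) has_real_derivative 0) (at 0)"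
    unfolding has_field_derivative_iff using lim1 sf0 phi0 by simp
  have dsf: "(sf has_real_derivative \<phi>') (at 0)"
    using DERIV_add[OF de dphi] by simp
  define q where "q = 1 - sf 0"
  have q0: "q > 0" using s1 by (simp add: q_def sf_def \<gamma>0)
  have d1: "((\<lambda>t. 1 - sf t) has_real_derivative (0 - \<phi>')) (at 0)"
    by (rule DERIV_diff[OF DERIV_const dsf])
  have d2: "((\<lambda>t. sqrt (1 - sf t)) has_real_derivative (inverse (sqrt q) / 2 * (0 - \<phi>'))) (at 0)"
  proof -
    have q0': "1 - sf 0 > 0" using q0 by (simp add: q_def)
    show ?thesis using DERIV_chain2[OF DERIV_real_sqrt[OF q0'] d1] by (simp add: q_def)
  qed
  have d3: "((\<lambda>t. inverse (sqrt (1 - sf t))) has_real_derivative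
      (- (inverse (sqrt q) / 2 * (0 - \<phi>') * inverse (sqrt (1 - sf 0) ^ Suc (Suc 0))))) (at 0)"
    by (rule DERIV_inverse_fun[OF d2]) (use q0 in \<open>simp add: q_def\<close>)
  have feq: "(\<lambda>t. vfun \<sigma> u (x + t *\<^sub>R axis j 1)) = (\<lambda>t. inverse (sqrt (1 - sf t)))"
    by (simp add: fun_eq_iff vfun_def sf_def \<gamma>_def e_def inverse_eq_divide)
  have pdv: "pd j (vfun \<sigma> u) x = - (inverse (sqrt q) / 2 * (0 - \<phi>') * inverse (sqrt q * sqrt q))"
  proof -
    have "pd j (vfun \<sigma> u) x = - (inverse (sqrt q) / 2 * (0 - \<phi>') * inverse (sqrt (1 - sf 0) ^ Suc (Suc 0)))"
      unfolding pd_def feq by (rule DERIV_imp_deriv[OF d3])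
    then show ?thesis by (simp only: q_def[symmetric] power_Suc power_0 mult_1_right)
  qed
  have v0: "vfun \<sigma> u x = 1 / sqrt q" by (simp add: vfun_def q_def sf_def \<gamma>0)
  have A1: "(\<Sum>a\<in>UNIV. dP a * w0$a) = (\<Sum>a\<in>UNIV. (matrix_inv (\<sigma> x) *v Du u x)$a * pd j (pd a u) x)"
    by (simp add: dP_def w0_def S0_def p0_def mult.commute)
  have B1: "(\<Sum>a\<in>UNIV. \<Sum>b\<in>UNIV. w0$a * dSS a b * w0$b) = (\<Sum>a\<in>UNIV. \<Sum>b\<in>UNIV. (matrix_inv (\<sigma> x) *v Du u x)$a * (matrix_inv (\<sigma> x) *v Du u x)$b
                 * pd j (\<lambda>y. \<sigma> y $ a $ b) x)"
    by (simp add: dSS_def w0_def S0_def p0_def mult_ac)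
  have sq: "sqrt q ^ 2 = q" using q0 by simp
  have sqp: "sqrt q > 0" using q0 by simp
  show ?thesis
    unfolding pdv v0 A1[symmetric] B1[symmetric] \<phi>'_def
    using sqp by (simp add: field_simps power3_eq_cube)
qed


theorem lemma7p3:
  fixes U :: "(real^'n::finite) set"
    and \<sigma> :: "real^'n \<Rightarrow> real^'n^'n"
    and u :: "real^'n \<Rightarrow> real"
  assumes "open U"
    and "riem_metric_on U \<sigma>"
    and "smooth_on U u"
    and "\<forall>x\<in>U. gradsq_sigma \<sigma> u x < 1"
  shows "\<forall>x\<in>U. \<bar>ginner_grad \<sigma> u u (vfun \<sigma> u) x\<bar>
                 \<le> normA \<sigma> u x * ginner_grad \<sigma> u u u x"
proof
  fix x assume xU: "x \<in> U"
  have s1: "gradsq_sigma \<sigma> u x < 1" using assms(4) xU by blast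
  show "\<bar>ginner_grad \<sigma> u u (vfun \<sigma> u) x\<bar> \<le> normA \<sigma> u x * ginner_grad \<sigma> u u u x"
  proof (rule pointwise)
    show "transpose (\<sigma> x) = \<sigma> x" using assms(2) xU by (auto simp: riem_metric_on_def)
    show "\<forall>w. w \<noteq> 0 \<longrightarrow> w \<bullet> (\<sigma> x *v w) > 0" using assms(2) xU by (auto simp: riem_metric_on_def)
    show "gradsq_sigma \<sigma> u x < 1" by (rule s1)
    show "\<forall>j. pd j (vfun \<sigma> u) x = vfun \<sigma> u x ^ 3 *
        ((\<Sum>a\<in>UNIV. (matrix_inv (\<sigma> x) *v Du u x)$a * pd j (pd a u) x)
         - 1/2 * (\<Sum>a\<in>UNIV. \<Sum>b\<in>UNIV. (matrix_inv (\<sigma> x) *v Du u x)$a * (matrix_inv (\<sigma> x) *v Du u x)$b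
                 * pd j (\<lambda>y. \<sigma> y $ a $ b) x))"
      using pd_vfun[OF assms(1,2,3) xU s1] by blast
  qed
qed

end
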